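(* Let ${\cal C}\subseteq\mathbb{Z}_2^\alpha\times\mathbb{Z}_4^\beta$ be a $\mathbb{Z}_2\mathbb{Z}_4$-additive code such that $\Phi({\cal C})$ is a linear binary code. Then ${\cal C}_Y$ is a $\mathbb{Z}_4$-additive code such that $\phi({\cal C}_Y)$ is a linear binary code.
   Context: A $\mathbb{Z}_2\mathbb{Z}_4$-additive code is a subgroup of $\mathbb{Z}_2^\alpha\times\mathbb{Z}_4^\beta$; ${\cal C}_Y$ is its projection onto the last $\beta$ ($\mathbb{Z}_4$) coordinates. Writing each $u'_i\in\mathbb{Z}_4$ as $u'_i=\tilde u'_i+2\hat u'_i$ with $\tilde u'_i,\hat u'_i\in\{0,1\}$, the Gray map $\phi:\mathbb{Z}_4^n\to\mathbb{Z}_2^{2n}$ is $\phi(u')=(\hat u'_0,\dots,\hat u'_{n-1},\tilde u'_0+\hat u'_0,\dots,\tilde u'_{n-1}+\hat u'_{n-1})$, and the extended Gray map is $\Phi(u\mid u')=(u\mid\phi(u'))\in\mathbb{Z}_2^{\alpha+2\beta}$. A binary code is linear if it is a $\mathbb{Z}_2$-subspace. *)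

theory Defs
  imports Main
begin

text \<open>Elements of Z_2 are represented by the integers 0,1 and elements of Z_4 by
  0,1,2,3; vectors are integer lists of the given length; arithmetic is componentwise mod m.\<close>

definition vecs :: "int \<Rightarrow> nat \<Rightarrow> int list set" where
  "vecs m n = {v. length v = n \<and> set v \<subseteq> {0..<m}}"

definition vadd :: "int \<Rightarrow> int list \<Rightarrow> int list \<Rightarrow> int list" where
  "vadd m u v = map2 (\<lambda>a b. (a + b) mod m) u v"

definition vneg :: "int \<Rightarrow> int list \<Rightarrow> int list" where
  "vneg m u = map (\<lambda>a. (- a) mod m) u"

definition Z2Z4_additive :: "nat \<Rightarrow> nat \<Rightarrow> (int list \<times> int list) set \<Rightarrow> bool" where
  "Z2Z4_additive \<alpha> \<beta> C \<longleftrightarrow>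
     C \<subseteq> vecs 2 \<alpha> \<times> vecs 4 \<beta> \<and>
     (replicate \<alpha> 0, replicate \<beta> 0) \<in> C \<and>
     (\<forall>x\<in>C. \<forall>y\<in>C. (vadd 2 (fst x) (fst y), vadd 4 (snd x) (snd y)) \<in> C) \<and>
     (\<forall>x\<in>C. (vneg 2 (fst x), vneg 4 (snd x)) \<in> C)"

definition Z4_additive :: "nat \<Rightarrow> int list set \<Rightarrow> bool" where
  "Z4_additive \<beta> D \<longleftrightarrow>
     D \<subseteq> vecs 4 \<beta> \<and> replicate \<beta> 0 \<in> D \<and>
     (\<forall>x\<in>D. \<forall>y\<in>D. vadd 4 x y \<in> D) \<and> (\<forall>x\<in>D. vneg 4 x \<in> D)"

definition binary_linear :: "nat \<Rightarrow> int list set \<Rightarrow> bool" where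
  "binary_linear n B \<longleftrightarrow>
     B \<subseteq> vecs 2 n \<and> replicate n 0 \<in> B \<and>
     (\<forall>x\<in>B. \<forall>y\<in>B. vadd 2 x y \<in> B) \<and>
     (\<forall>x\<in>B. \<forall>c\<in>{0,1::int}. map (\<lambda>a. (c * a) mod 2) x \<in> B)"

text \<open>Gray map: u' = tilde + 2 hat, tilde = u' mod 2, hat = u' div 2.\<close>
definition gray :: "int list \<Rightarrow> int list" where
  "gray u' = map (\<lambda>a. a div 2) u' @ map (\<lambda>a. (a mod 2 + a div 2) mod 2) u'"

definition Gray_ext :: "int list \<times> int list \<Rightarrow> int list" where
  "Gray_ext x = fst x @ gray (snd x)"

definition C_Y :: "(int list \<times> int list) set \<Rightarrow> int list set" where
  "C_Y C = snd ` C"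

end

theory Submission
  imports Defs
begin

lemma vadd_append: "length a = length c \<Longrightarrow> vadd m (a @ b) (c @ d) = vadd m a c @ vadd m b d"
  by (simp add: vadd_def)

lemma length_vadd: "length (vadd m a b) = min (length a) (length b)"
  by (simp add: vadd_def)

lemma gray_vecs: "u \<in> vecs 4 n \<Longrightarrow> gray u \<in> vecs 2 (2*n)"
  unfolding vecs_def gray_def by (auto simp: subset_iff)

lemma gray_zero: "gray (replicate n 0) = replicate (2*n) 0"
  unfolding gray_def by (simp add: replicate_add[symmetric] mult_2)

lemma mod2_id: "set (v::int list) \<subseteq> {0..<2} \<Longrightarrow> map (\<lambda>a. (1 * a) mod 2) v = v"
  by (induction v) auto

lemma scal: "set (v::int list) \<subseteq> {0..<2} \<Longrightarrow> c \<in> {0,1::int} \<Longrightarrow>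
   map (\<lambda>a. (c * a) mod 2) v = v \<or> map (\<lambda>a. (c * a) mod 2) v = replicate (length v) 0"
  using mod2_id[of v] by (auto simp: map_replicate_const)

theorem mainTheorem3:
  fixes \<alpha> \<beta> :: nat and C :: "(int list \<times> int list) set"
  assumes "Z2Z4_additive \<alpha> \<beta> C"
    and "binary_linear (\<alpha> + 2 * \<beta>) (Gray_ext ` C)"
  shows "Z4_additive \<beta> (C_Y C) \<and> binary_linear (2 * \<beta>) (gray ` C_Y C)"
proof
  note A = assms(1)[unfolded Z2Z4_additive_def]
  note B = assms(2)[unfolded binary_linear_def]
  show "Z4_additive \<beta> (C_Y C)"
    unfolding Z4_additive_def C_Y_def
  proof (intro conjI)
    show "snd ` C \<subseteq> vecs 4 \<beta>" using A by auto
    show "replicate \<beta> 0 \<in> snd ` C" using A by force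
    show "\<forall>x\<in>snd ` C. \<forall>y\<in>snd ` C. vadd 4 x y \<in> snd ` C"
      using A by (auto, metis image_eqI snd_conv)
    show "\<forall>x\<in>snd ` C. vneg 4 x \<in> snd ` C"
      using A by (auto, metis image_eqI snd_conv)
  qed
  have sub: "gray ` snd ` C \<subseteq> vecs 2 (2*\<beta>)"
  proof
    fix v assume "v \<in> gray ` snd ` C"
    then obtain x where "x \<in> C" "v = gray (snd x)" by auto
    moreover have "snd x \<in> vecs 4 \<beta>" using A \<open>x \<in> C\<close> by auto
    ultimately show "v \<in> vecs 2 (2*\<beta>)" using gray_vecs by simp
  qed
  have zero: "replicate (2*\<beta>) 0 \<in> gray ` snd ` C"
  proof -
    have "replicate \<beta> 0 \<in> snd ` C" using A by force
    thus ?thesis using gray_zero by (metis image_eqI)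
  qed
  have lenfst: "\<And>x. x \<in> C \<Longrightarrow> length (fst x) = \<alpha>" using A unfolding vecs_def by auto
  have add: "vadd 2 (gray (snd x)) (gray (snd y)) \<in> gray ` snd ` C" if "x \<in> C" "y \<in> C" for x y
  proof -
    have "vadd 2 (Gray_ext x) (Gray_ext y) \<in> Gray_ext ` C" using B that by blast
    then obtain z where z: "z \<in> C" "Gray_ext z = vadd 2 (Gray_ext x) (Gray_ext y)" by auto
    hence "fst z @ gray (snd z) = vadd 2 (fst x) (fst y) @ vadd 2 (gray (snd x)) (gray (snd y))"
      using lenfst that by (simp add: Gray_ext_def vadd_append)
    moreover have "length (fst z) = length (vadd 2 (fst x) (fst y))"
      using lenfst that z by (simp add: length_vadd)
    ultimately have "gray (snd z) = vadd 2 (gray (snd x)) (gray (snd y))" by simp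
    thus ?thesis using z by (metis image_eqI)
  qed
  show "binary_linear (2 * \<beta>) (gray ` C_Y C)"
    unfolding binary_linear_def C_Y_def
  proof (intro conjI ballI)
    show "gray ` snd ` C \<subseteq> vecs 2 (2*\<beta>)" by (rule sub)
    show "replicate (2*\<beta>) 0 \<in> gray ` snd ` C" by (rule zero)
    fix x y assume "x \<in> gray ` snd ` C" "y \<in> gray ` snd ` C"
    then show "vadd 2 x y \<in> gray ` snd ` C" using add by auto
  next
    fix x and c :: int assume x: "x \<in> gray ` snd ` C" and c: "c \<in> {0,1}"
    have v: "x \<in> vecs 2 (2*\<beta>)" using sub x by blast
    hence "set x \<subseteq> {0..<2}" "length x = 2*\<beta>" unfolding vecs_def by auto
    thus "map (\<lambda>a. (c * a) mod 2) x \<in> gray ` snd ` C"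
      using scal[OF _ c, of x] x zero by metis
  qed
qed

end
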